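(* For every \textsc{Strip Cover} instance $(x,b)$, $\mathrm{RR}(x,b)=\sum_{i=1}^n b_i/r_i\ge\frac{2}{3}\,\mathrm{Opt}_{SC}(x,b)$, where $r_i=\max\{x_i,1-x_i\}$ and $\mathrm{Opt}_{SC}(x,b)$ is the optimal \textsc{Strip Cover} lifetime. That is, \textsc{RoundRobin} is a $\frac{3}{2}$-approximation algorithm for \textsc{Strip Cover}.
   Context: \textsc{Strip Cover}: An instance is a pair $(x,b)$, where $x=(x_1,\ldots,x_n)\in[0,1]^n$ with $x_1\le\cdots\le x_n$ are sensor locations and $b=(b_1,\ldots,b_n)$, $b_i\ge0$ rational, are battery charges. A solution is a vector $\rho(t)=(\rho_1(t),\ldots,\rho_n(t))$ of piecewise constant functions $\rho_i:[0,\infty)\to[0,\infty)$ with finitely many pieces (the radius of sensor $i$ at time $t$), subject to $\int_0^\infty\rho_i(t)\,dt\le b_i$ for every $i$. The interval $[0,1]$ is covered at time $t$ if $[0,1]\subseteq\bigcup_i[x_i-\rho_i(t),x_i+\rho_i(t)]$. The lifetime of a solution is the maximum $T$ such that $[0,1]$ is covered at all $t\in[0,T]$; $\mathrm{Opt}_{SC}(x,b)$ is the maximum lifetime. The \textsc{RoundRobin} solution lets the sensors take turns in order $1,\ldots,n$, sensor $i$ alone using radius $r_i=\max\{x_i,1-x_i\}$ (which covers $[0,1]$) for $b_i/r_i$ time units, giving lifetime $\mathrm{RR}(x,b)=\sum_i b_i/r_i$. *)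

theory Defs
  imports "HOL-Analysis.Analysis"
begin

text \<open>Sensors are indexed by 0..n-1 (the paper uses 1..n).\<close>

definition sc_instance :: "nat \<Rightarrow> (nat \<Rightarrow> real) \<Rightarrow> (nat \<Rightarrow> real) \<Rightarrow> bool" where
  "sc_instance n x b \<longleftrightarrow>
     (\<forall>i<n. 0 \<le> x i \<and> x i \<le> 1) \<and>
     (\<forall>i j. i \<le> j \<longrightarrow> j < n \<longrightarrow> x i \<le> x j) \<and>
     (\<forall>i<n. 0 \<le> b i \<and> b i \<in> \<rat>)"

definition piecewise_const :: "(real \<Rightarrow> real) \<Rightarrow> bool" where
  "piecewise_const f \<longleftrightarrow>
     (\<exists>S. finite S \<and>
        (\<forall>a c. 0 \<le> a \<longrightarrow> {a<..<c} \<inter> S = {} \<longrightarrow>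
           (\<forall>s\<in>{a<..<c}. \<forall>t\<in>{a<..<c}. f s = f t)))"

definition sc_feasible :: "nat \<Rightarrow> (nat \<Rightarrow> real) \<Rightarrow> (nat \<Rightarrow> real \<Rightarrow> real) \<Rightarrow> bool" where
  "sc_feasible n b \<rho> \<longleftrightarrow>
     (\<forall>i<n. piecewise_const (\<rho> i) \<and> (\<forall>t\<ge>0. 0 \<le> \<rho> i t) \<and>
        (\<integral>\<^sup>+ t\<in>{0..}. ennreal (\<rho> i t) \<partial>lborel) \<le> ennreal (b i))"

definition sc_covered :: "nat \<Rightarrow> (nat \<Rightarrow> real) \<Rightarrow> (nat \<Rightarrow> real \<Rightarrow> real) \<Rightarrow> real \<Rightarrow> bool" where
  "sc_covered n x \<rho> t \<longleftrightarrow> {0..1} \<subseteq> (\<Union>i<n. {x i - \<rho> i t .. x i + \<rho> i t})"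

text \<open>Optimal lifetime: supremum of all T \<ge> 0 such that some feasible solution covers
  [0,1] at every time in [0,T]. 0 is inserted so the set is never empty (only relevant for n = 0).\<close>
definition opt_sc :: "nat \<Rightarrow> (nat \<Rightarrow> real) \<Rightarrow> (nat \<Rightarrow> real) \<Rightarrow> real" where
  "opt_sc n x b = Sup (insert 0 {T. 0 \<le> T \<and>
      (\<exists>\<rho>. sc_feasible n b \<rho> \<and> (\<forall>t\<in>{0..T}. sc_covered n x \<rho> t))})"

definition round_robin :: "nat \<Rightarrow> (nat \<Rightarrow> real) \<Rightarrow> (nat \<Rightarrow> real) \<Rightarrow> real" where
  "round_robin n x b = (\<Sum>i<n. b i / max (x i) (1 - x i))"

end

theory Submission
  imports Defs
begin

lemma le_frac: fixes A B C D :: real assumes "0<B" "0<D" "A*D \<le> C*B" shows "A/B \<le> C/D"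
  using assms by (simp add: divide_simps)

lemma c1: fixes x r :: real assumes "1/2 \<le> x - r" "x+r \<le> 1" "0 \<le> r"
  shows "(1-(x-r))/(1+(x-r)) - (1-(x+r))/(1+(x+r)) \<le> r / x"
proof -
  have e: "(1-(x-r))/(1+(x-r)) - (1-(x+r))/(1+(x+r)) = (4*r)/((1+(x-r))*(1+(x+r)))"
    using assms by (simp add: field_simps)
  have p: "0 \<le> r*(1-x-r)*(1-x+r)" using assms by simp
  have "(4*r)*x \<le> r*((1+(x-r))*(1+(x+r)))"
  proof -
    have "r*((1+(x-r))*(1+(x+r))) - (4*r)*x = r*(1-x-r)*(1-x+r)" by (simp add: algebra_simps)
    then show ?thesis using p by linarith
  qed
  then show ?thesis unfolding e using assms by (intro le_frac) auto
qed

lemma c2: fixes x r :: real assumes "1/2 \<le> x - r" "x+r \<ge> 1" "0 \<le> r"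
  shows "(1-(x-r))/(1+(x-r)) \<le> r / x"
proof -
  have p: "0 \<le> (x-r)*(x+r-1)" using assms by simp
  have "(1-(x-r))*x \<le> r*(1+(x-r))"
  proof -
    have "r*(1+(x-r)) - (1-(x-r))*x = (x-r)*(x+r-1)" by (simp add: algebra_simps)
    then show ?thesis using p by linarith
  qed
  then show ?thesis using assms by (intro le_frac) auto
qed

lemma c3: fixes a c :: real assumes "0 \<le> a" "a \<le> 1/2" "1/2 \<le> c" "c \<le> 1" "1 \<le> a + c"
  shows "2/3 - (1-c)/(1+c) - a/(2-a) \<le> (c-a)/(a+c)"
proof -
  have e: "2/3 - (1-c)/(1+c) - a/(2-a) = ((2-4*a)*(1+c) + (4*c-2)*(2-a))/(3*(2-a)*(1+c))"
    using assms by (simp add: field_simps)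
  have p: "0 \<le> (1/2-a)*(1-c)*(3/2+5*(c-1/2)) + (3/2)*(c-1/2)*(1-c) + 21/2*(1/2-a)^2 + 11*(1/2-a)^2*(c-1/2)"
    using assms by (intro add_nonneg_nonneg mult_nonneg_nonneg) auto
  have "((2-4*a)*(1+c) + (4*c-2)*(2-a))*(a+c) \<le> (c-a)*(3*(2-a)*(1+c))"
  proof -
    have "(c-a)*(3*(2-a)*(1+c)) - ((2-4*a)*(1+c) + (4*c-2)*(2-a))*(a+c) = (1/2-a)*(1-c)*(3/2+5*(c-1/2)) + (3/2)*(c-1/2)*(1-c) + 21/2*(1/2-a)^2 + 11*(1/2-a)^2*(c-1/2)"
      by (simp add: field_simps power2_eq_square)
    then show ?thesis using p by linarith
  qed
  then show ?thesis unfolding e using assms by (intro le_frac) auto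
qed

lemma c4: fixes a x :: real assumes "0 \<le> a" "a \<le> 1/2" "(1+a)/2 \<le> x"
  shows "2/3 - a/(2-a) \<le> (x-a)/x"
proof -
  have e: "2/3 - a/(2-a) = (4-5*a)/(3*(2-a))" using assms by (simp add: field_simps)
  have p: "0 \<le> (2+2*a)*(x-(1+a)/2) + (2*a-1)^2" using assms by (intro add_nonneg_nonneg mult_nonneg_nonneg) auto
  have "(4-5*a)*x \<le> (x-a)*(3*(2-a))"
  proof -
    have "(x-a)*(3*(2-a)) - (4-5*a)*x = (2+2*a)*(x-(1+a)/2) + (2*a-1)^2"
      by (simp add: field_simps power2_eq_square)
    then show ?thesis using p by linarith
  qed
  then show ?thesis unfolding e using assms by (intro le_frac) auto
qed
definition Phi :: "real \<Rightarrow> real" where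
 "Phi p = (if p \<le> 1/2 then p/(2-p) else 2/3 - (1-p)/(1+p))"

lemma Phi_lo: "p \<le> 1/2 \<Longrightarrow> Phi p = p/(2-p)" by (simp add: Phi_def)
lemma Phi_hi: assumes "1/2 \<le> p" shows "Phi p = 2/3 - (1-p)/(1+p)"
proof (cases "p = 1/2")
  case True then show ?thesis by (simp add: Phi_def True)
next
  case False then show ?thesis using assms by (simp add: Phi_def)
qed

lemma Phi_sym: "0 \<le> p \<Longrightarrow> p \<le> 1 \<Longrightarrow> Phi (1-p) = 2/3 - Phi p"
proof (cases "p \<le> 1/2")
  case True
  assume "0 \<le> p" "p \<le> 1"
  then show ?thesis using True by (simp add: Phi_lo Phi_hi)
next
  case False
  assume "0 \<le> p" "p \<le> 1"
  then show ?thesis using False by (simp add: Phi_lo Phi_hi)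
qed

lemma Phi_mono: assumes "0 \<le> p" "p \<le> q" "q \<le> 1" shows "Phi p \<le> Phi q"
proof -
  consider "q \<le> 1/2" | "1/2 \<le> p" | "p \<le> 1/2" "1/2 \<le> q" by linarith
  then show ?thesis
  proof cases
    case 1
    then show ?thesis using assms by (simp add: Phi_lo, intro le_frac) (auto simp: algebra_simps)
  next
    case 2
    have "(1-q)/(1+q) \<le> (1-p)/(1+p)" using assms 2 by (intro le_frac) (auto simp: algebra_simps)
    then show ?thesis using assms 2 by (simp add: Phi_hi)
  next
    case 3
    have a: "p/(2-p) \<le> 1/3" using 3 by (simp add: divide_simps)
    have b: "(1-q)/(1+q) \<le> 1/3" using 3 assms by (simp add: divide_simps)
    have "Phi p = p/(2-p)" "Phi q = 2/3 - (1-q)/(1+q)" using 3 by (simp_all add: Phi_lo Phi_hi)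
    then show ?thesis using a b by linarith
  qed
qed

lemma Phi_le: "0 \<le> p \<Longrightarrow> p \<le> 1 \<Longrightarrow> Phi p \<le> 2/3"
  using Phi_mono[of p 1] by (simp add: Phi_hi)

lemma Phi_0: "Phi 0 = 0" by (simp add: Phi_def)

lemma Phi_surj: assumes "0 \<le> y" "y \<le> 2/3" shows "\<exists>p. 0 \<le> p \<and> p \<le> 1 \<and> Phi p = y"
proof (cases "y \<le> 1/3")
  case True
  define p where "p = 2*y/(1+y)"
  have p1: "p \<le> 1/2" using True assms unfolding p_def by (simp add: divide_simps)
  have "p/(2-p) = y" using assms unfolding p_def by (simp add: field_simps)
  then have "Phi p = y" using Phi_lo[OF p1] by simp
  moreover have "0 \<le> p" using assms unfolding p_def by simp
  ultimately show ?thesis using p1 by (intro exI[of _ p]) auto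
next
  case False
  define z where "z = 2/3 - y"
  define p where "p = (1-z)/(1+z)"
  have z: "0 \<le> z" "z < 1/3" using False assms unfolding z_def by auto
  have p1: "1/2 \<le> p" "p \<le> 1" using z unfolding p_def by (simp_all add: divide_simps)
  have "(1-p)/(1+p) = z" using z unfolding p_def by (simp add: field_simps)
  then have "Phi p = y" using p1 unfolding Phi_hi[OF p1(1)] z_def by simp
  then show ?thesis using p1 by (intro exI[of _ p]) auto
qed

lemma sensor_right:
  fixes x \<rho> :: real
  assumes "1/2 \<le> x" "x \<le> 1" "0 \<le> \<rho>"
  shows "Phi (min (x+\<rho>) 1) - Phi (max (x-\<rho>) 0) \<le> \<rho> / x"
proof -
  consider "x - \<rho> \<ge> 1/2" | "x-\<rho> < 1/2" "x - \<rho> \<ge> 0" | "x - \<rho> < 0" by linarith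
  then show ?thesis
  proof cases
    case 1
    then show ?thesis
    proof (cases "x + \<rho> \<le> 1")
      case True
      then show ?thesis using 1 assms c1[of x \<rho>] by (simp add: Phi_hi min_def max_def)
    next
      case False
      then show ?thesis using 1 assms c2[of x \<rho>] by (simp add: Phi_hi min_def max_def)
    qed
  next
    case 2
    then show ?thesis
    proof (cases "x + \<rho> \<le> 1")
      case True
      have "(x+\<rho> - (x-\<rho>))/((x-\<rho>) + (x+\<rho>)) = \<rho>/x" using assms by (simp add: field_simps)
      moreover have "max (x-\<rho>) 0 = x-\<rho>" "min (x+\<rho>) 1 = x+\<rho>" using 2 True by auto
      ultimately show ?thesis using 2 True assms c3[of "x-\<rho>" "x+\<rho>"] by (simp add: Phi_hi Phi_lo)
    next
      case False
      have "(x - (x-\<rho>))/x = \<rho>/x" by simp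
      moreover have "max (x-\<rho>) 0 = x-\<rho>" "min (x+\<rho>) 1 = 1" using 2 False by auto
      ultimately show ?thesis using 2 False assms c4[of "x-\<rho>" x] by (simp add: Phi_hi Phi_lo)
    qed
  next
    case 3
    have "1 \<le> \<rho>/x" using 3 assms by (simp add: divide_simps)
    moreover have "Phi (min (x+\<rho>) 1) \<le> 2/3" using assms by (intro Phi_le) auto
    ultimately show ?thesis using 3 by (simp add: max_def Phi_0)
  qed
qed

lemma sensor:
  fixes x \<rho> :: real
  assumes "0 \<le> x" "x \<le> 1" "0 \<le> \<rho>"
  shows "Phi (min (x+\<rho>) 1) - Phi (max (x-\<rho>) 0) \<le> \<rho> / max x (1-x)"
proof (cases "1/2 \<le> x")
  case True
  then have "max x (1-x) = x" by simp
  then show ?thesis using sensor_right[of x \<rho>] assms True by simp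
next
  case False
  define y where "y = 1 - x"
  have y: "1/2 \<le> y" "y \<le> 1" using False assms unfolding y_def by auto
  have e1: "min (x+\<rho>) 1 = 1 - max (y-\<rho>) 0" unfolding y_def by (simp add: min_def max_def)
  have e2: "max (x-\<rho>) 0 = 1 - min (y+\<rho>) 1" unfolding y_def by (simp add: min_def max_def)
  have "Phi (min (x+\<rho>) 1) - Phi (max (x-\<rho>) 0) = Phi (min (y+\<rho>) 1) - Phi (max (y-\<rho>) 0)"
    unfolding e1 e2 using y assms by (simp add: Phi_sym)
  also have "\<dots> \<le> \<rho> / y" using sensor_right[OF y assms(3)] .
  finally show ?thesis using False unfolding y_def by (simp add: max_def)
qed

lemma cover_sum:
  fixes x \<rho> :: "nat \<Rightarrow> real"
  assumes I: "finite I" and x: "\<And>i. i\<in>I \<Longrightarrow> 0 \<le> x i \<and> x i \<le> 1"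
    and r: "\<And>i. i\<in>I \<Longrightarrow> 0 \<le> \<rho> i"
    and cov: "{0..1} \<subseteq> (\<Union>i\<in>I. {x i - \<rho> i .. x i + \<rho> i})"
  shows "2/3 \<le> (\<Sum>i\<in>I. \<rho> i / max (x i) (1 - x i))"
proof -
  define lo where "lo i = Phi (max (x i - \<rho> i) 0)" for i
  define hi where "hi i = Phi (min (x i + \<rho> i) 1)" for i
  have mono: "lo i \<le> hi i" if "i\<in>I" for i
    unfolding lo_def hi_def using x[OF that] r[OF that] by (intro Phi_mono) auto
  have sub: "{0..2/3} \<subseteq> (\<Union>i\<in>I. {lo i..hi i})"
  proof
    fix y :: real assume "y \<in> {0..2/3}"
    then obtain p where p: "0 \<le> p" "p \<le> 1" "Phi p = y" using Phi_surj by auto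
    then obtain i where i: "i \<in> I" "x i - \<rho> i \<le> p" "p \<le> x i + \<rho> i" using cov by force
    have "lo i \<le> Phi p" unfolding lo_def using p i x[OF i(1)] r[OF i(1)] by (intro Phi_mono) auto
    moreover have "Phi p \<le> hi i" unfolding hi_def using p i x[OF i(1)] r[OF i(1)]
      by (intro Phi_mono) auto
    ultimately have "lo i \<le> y" "y \<le> hi i" using p by auto
    then show "y \<in> (\<Union>i\<in>I. {lo i..hi i})" using i by auto
  qed
  have "ennreal (2/3) = emeasure lborel {0..2/3::real}" by simp
  also have "\<dots> \<le> emeasure lborel (\<Union>i\<in>I. {lo i..hi i})" by (rule emeasure_mono[OF sub]) auto
  also have "\<dots> \<le> (\<Sum>i\<in>I. emeasure lborel {lo i..hi i})" by (rule emeasure_subadditive_finite[OF I]) auto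
  also have "\<dots> = (\<Sum>i\<in>I. ennreal (hi i - lo i))" using mono by (intro sum.cong) auto
  also have "\<dots> = ennreal (\<Sum>i\<in>I. hi i - lo i)" using mono by (subst sum_ennreal) auto
  finally have "2/3 \<le> (\<Sum>i\<in>I. hi i - lo i)"
    using mono by (subst (asm) ennreal_le_iff) (auto intro: sum_nonneg)
  also have "\<dots> \<le> (\<Sum>i\<in>I. \<rho> i / max (x i) (1 - x i))"
    unfolding hi_def lo_def using x r by (intro sum_mono sensor) auto
  finally show ?thesis .
qed

lemma ev_ball:
  fixes g :: "real \<Rightarrow> real"
  assumes h: "\<forall>s\<in>ball t e. g s = g t" and e: "0 < e"
  shows "eventually (\<lambda>s. g s = g t) (nhds t)"
  unfolding eventually_nhds_metric
proof (intro exI[of _ e] conjI allI impI)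
  show "0 < e" by (rule e)
  fix s assume "dist s t < e"
  then have st: "s \<in> ball t e" by (simp add: dist_commute)
  from h st show "g s = g t" by (rule bspec)
qed

lemma pc_meas:
  assumes "piecewise_const f"
  shows "(\<lambda>t. if 0 \<le> t then f t else 0) \<in> borel_measurable borel"
proof -
  obtain S where S: "finite S" "\<And>a c. 0 \<le> a \<Longrightarrow> {a<..<c} \<inter> S = {} \<Longrightarrow>
      (\<forall>s\<in>{a<..<c}. \<forall>t\<in>{a<..<c}. f s = f t)"
    using assms unfolding piecewise_const_def by blast
  define g where "g t = (if 0 \<le> t then f t else 0)" for t :: real
  have op: "open (- insert 0 S)" using S(1) by (simp add: open_Compl finite_imp_closed)
  have "continuous_on (- insert 0 S) g"
    unfolding continuous_on_eq_continuous_at[OF op]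
  proof
    fix t assume t: "t \<in> - insert 0 S"
    obtain e where e: "e > 0" "ball t e \<subseteq> - insert 0 S" using op t open_contains_ball by blast
    have "eventually (\<lambda>s. g s = g t) (nhds t)"
    proof (cases "t < 0")
      case True
      have "\<forall>s\<in>ball t e. g s = g t"
      proof
        fix s assume s: "s \<in> ball t e"
        have "s < 0"
        proof (rule ccontr)
          assume "\<not> s < 0"
          then have "0 \<in> closed_segment t s" using True by (auto simp: closed_segment_eq_real_ivl)
          then have "0 \<in> ball t e" using s convex_ball[of t e] e(1)
            by (meson centre_in_ball closed_segment_subset subsetD)
          then have "0 \<in> - insert 0 S" using e(2) by (rule rev_subsetD)
          then show False by simp
        qed
        then show "g s = g t" using True by (simp add: g_def)
      qed
      then show ?thesis using e(1) by (rule ev_ball)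
    next
      case False
      then have t0: "t > 0" using t by auto
      have "0 \<notin> ball t e"
      proof
        assume "0 \<in> ball t e"
        then have "0 \<in> - insert 0 S" using e(2) by (rule rev_subsetD)
        then show False by simp
      qed
      then have te: "e \<le> t" using t0 by (simp add: dist_real_def)
      have nS: "y \<notin> S" if "t-e<y" "y<t+e" for y
      proof -
        have "y \<in> ball t e" using that by (auto simp: dist_real_def)
        then have "y \<in> - insert 0 S" using e(2) by (rule rev_subsetD)
        then show ?thesis by simp
      qed
      have dis: "{t-e<..<t+e} \<inter> S = {}" using nS by auto
      have te0: "0 \<le> t - e" using te by simp
      have all: "\<forall>s\<in>{t-e<..<t+e}. \<forall>u\<in>{t-e<..<t+e}. f s = f u"
        by (rule S(2)[OF te0 dis])
      have tin: "t \<in> {t-e<..<t+e}" using e(1) by simp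
      have const: "\<forall>s\<in>{t-e<..<t+e}. f s = f t"
      proof
        fix s assume s: "s \<in> {t-e<..<t+e}"
        show "f s = f t" using bspec[OF bspec[OF all s] tin] .
      qed
      have "\<forall>s\<in>ball t e. g s = g t"
      proof
        fix s assume "s \<in> ball t e"
        then have s: "s \<in> {t-e<..<t+e}" by (auto simp: dist_real_def)
        then have "0 \<le> s" using te by simp
        have "f s = f t" using bspec[OF const s] .
        then show "g s = g t" using \<open>0 \<le> s\<close> t0 unfolding g_def by simp
      qed
      then show ?thesis using e(1) by (rule ev_ball)
    qed
    then show "isCont g t" using isCont_cong[of g "\<lambda>_. g t" t] by simp
  qed
  then have "g \<in> borel_measurable borel"
    by (intro borel_measurable_continuous_countable_exceptions[of "insert 0 S"])
       (auto simp: S(1) countable_finite)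
  then show ?thesis unfolding g_def .
qed

lemma lifetime_bound:
  fixes n :: nat and x b :: "nat \<Rightarrow> real" and \<rho> :: "nat \<Rightarrow> real \<Rightarrow> real"
  assumes inst: "sc_instance n x b" and feas: "sc_feasible n b \<rho>" and T: "0 \<le> T"
    and cov: "\<forall>t\<in>{0..T}. sc_covered n x \<rho> t"
  shows "(2/3)*T \<le> round_robin n x b"
proof -
  define r where "r i = max (x i) (1 - x i)" for i
  have rpos: "0 < r i" for i unfolding r_def by auto
  have bnn: "i < n \<Longrightarrow> 0 \<le> b i" for i using inst unfolding sc_instance_def by auto
  have xr: "i < n \<Longrightarrow> 0 \<le> x i \<and> x i \<le> 1" for i using inst unfolding sc_instance_def by auto
  define g where "g i t = (if 0 \<le> t then \<rho> i t else 0)" for i t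
  have gnn: "i < n \<Longrightarrow> 0 \<le> g i t" for i t using feas unfolding sc_feasible_def g_def by auto
  have meas: "i < n \<Longrightarrow> g i \<in> borel_measurable borel" for i
    unfolding g_def using feas pc_meas unfolding sc_feasible_def by blast
  have meas2: "i < n \<Longrightarrow> (\<lambda>t. ennreal (g i t)) \<in> borel_measurable lborel" for i
    using meas by (simp add: measurable_compose[OF _ measurable_ennreal])
  have int: "i < n \<Longrightarrow> (\<integral>\<^sup>+t. ennreal (g i t) \<partial>lborel) \<le> ennreal (b i)" for i
  proof -
    assume i: "i < n"
    have "(\<integral>\<^sup>+t. ennreal (g i t) \<partial>lborel) = (\<integral>\<^sup>+ t\<in>{0..}. ennreal (\<rho> i t) \<partial>lborel)"
      by (intro nn_integral_cong) (auto simp: g_def split: split_indicator)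
    also have "\<dots> \<le> ennreal (b i)" using feas i unfolding sc_feasible_def by auto
    finally show ?thesis .
  qed
  have pt: "2/3 \<le> (\<Sum>i<n. g i t / r i)" if t: "t \<in> {0..T}" for t
  proof -
    have "2/3 \<le> (\<Sum>i\<in>{..<n}. \<rho> i t / max (x i) (1 - x i))"
      using cov t feas xr unfolding sc_covered_def sc_feasible_def
      by (intro cover_sum[where x=x and \<rho>="\<lambda>i. \<rho> i t"]) auto
    also have "\<dots> = (\<Sum>i<n. g i t / r i)" using t by (simp add: g_def r_def)
    finally show ?thesis .
  qed
  have "ennreal ((2/3)*T) = (\<integral>\<^sup>+t. ennreal (2/3) * indicator {0..T} t \<partial>lborel)"
    using T by (simp add: nn_integral_cmult_indicator flip: ennreal_mult)
  also have "\<dots> \<le> (\<integral>\<^sup>+t. (\<Sum>i<n. ennreal (g i t / r i)) \<partial>lborel)"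
  proof (rule nn_integral_mono)
    fix t
    show "ennreal (2/3) * indicator {0..T} t \<le> (\<Sum>i<n. ennreal (g i t / r i))"
    proof (cases "t \<in> {0..T}")
      case True
      have "(\<Sum>i<n. ennreal (g i t / r i)) = ennreal (\<Sum>i<n. g i t / r i)"
        using gnn rpos by (intro sum_ennreal) (auto intro: divide_nonneg_pos)
      then show ?thesis using True pt[OF True] by simp
    qed simp
  qed
  also have "\<dots> = (\<Sum>i<n. \<integral>\<^sup>+t. ennreal (g i t / r i) \<partial>lborel)"
  proof (rule nn_integral_sum)
    fix i assume i: "i \<in> {..<n}"
    have "(\<lambda>t. g i t / r i) \<in> borel_measurable borel" using meas i by simp
    then show "(\<lambda>t. ennreal (g i t / r i)) \<in> borel_measurable lborel"
      by (simp add: measurable_compose[OF _ measurable_ennreal])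
  qed
  also have "\<dots> = (\<Sum>i<n. ennreal (1 / r i) * \<integral>\<^sup>+t. ennreal (g i t) \<partial>lborel)"
  proof (rule sum.cong)
    fix i assume i: "i \<in> {..<n}"
    have "(\<integral>\<^sup>+t. ennreal (g i t / r i) \<partial>lborel) = (\<integral>\<^sup>+t. ennreal (1 / r i) * ennreal (g i t) \<partial>lborel)"
      using gnn i rpos by (intro nn_integral_cong) (simp add: ennreal_mult[symmetric] less_imp_le)
    also have "\<dots> = ennreal (1 / r i) * \<integral>\<^sup>+t. ennreal (g i t) \<partial>lborel"
      using meas2 i by (intro nn_integral_cmult) auto
    finally show "(\<integral>\<^sup>+t. ennreal (g i t / r i) \<partial>lborel) = ennreal (1 / r i) * \<integral>\<^sup>+t. ennreal (g i t) \<partial>lborel" .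
  qed simp
  also have "\<dots> \<le> (\<Sum>i<n. ennreal (1 / r i) * ennreal (b i))"
    using int by (intro sum_mono mult_left_mono) auto
  also have "\<dots> = (\<Sum>i<n. ennreal (b i / r i))"
    using bnn rpos by (intro sum.cong) (auto simp: ennreal_mult[symmetric] less_imp_le)
  also have "\<dots> = ennreal (round_robin n x b)"
    unfolding round_robin_def r_def using bnn rpos[unfolded r_def]
    by (intro sum_ennreal) (auto intro: divide_nonneg_pos)
  finally have "ennreal ((2/3)*T) \<le> ennreal (round_robin n x b)" .
  moreover have "0 \<le> round_robin n x b"
    unfolding round_robin_def using bnn rpos[unfolded r_def]
    by (intro sum_nonneg) (auto intro: divide_nonneg_pos)
  ultimately show ?thesis by simp
qed

theorem theorem3:
  fixes n :: nat and x b :: "nat \<Rightarrow> real"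
  assumes "sc_instance n x b"
  shows "round_robin n x b \<ge> (2/3) * opt_sc n x b"
proof -
  have rr0: "0 \<le> round_robin n x b"
    using assms unfolding round_robin_def sc_instance_def
    by (intro sum_nonneg) (auto intro: divide_nonneg_pos)
  have "opt_sc n x b \<le> (3/2) * round_robin n x b"
    unfolding opt_sc_def
  proof (rule cSup_least)
    fix y assume "y \<in> insert 0 {T. 0 \<le> T \<and>
      (\<exists>\<rho>. sc_feasible n b \<rho> \<and> (\<forall>t\<in>{0..T}. sc_covered n x \<rho> t))}"
    then show "y \<le> (3/2) * round_robin n x b"
    proof
      assume "y = 0" then show ?thesis using rr0 by simp
    next
      assume "y \<in> {T. 0 \<le> T \<and> (\<exists>\<rho>. sc_feasible n b \<rho> \<and> (\<forall>t\<in>{0..T}. sc_covered n x \<rho> t))}"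
      then obtain \<rho> where "0 \<le> y" "sc_feasible n b \<rho>" "\<forall>t\<in>{0..y}. sc_covered n x \<rho> t" by auto
      then have "(2/3)*y \<le> round_robin n x b" using lifetime_bound assms by blast
      then show ?thesis by simp
    qed
  qed simp
  then show ?thesis by simp
qed

end
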